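(* Let $N, B$ be positive integers with $B$ dividing $N$, and $\lambda>0$. Consider all assignment vectors $\bar N=(N_1,\dots,N_B)$ of positive integers with $\sum_{i=1}^B N_i = N$. For each, let $T_1,\dots,T_B$ be independent with $T_i\sim \mathrm{Exp}(N_i\lambda)$ and $T(\bar N)=\max(T_1,\dots,T_B)$. Then the balanced assignment $\bar N_b = (N/B,\dots,N/B)$ minimizes $\mathbb{E}[T(\bar N)]$ over all such assignments, i.e. $\mathbb{E}[T(\bar N)] \ge \mathbb{E}[T(\bar N_b)]$ for every such $\bar N$.
   Context: Interpretation: a data set is split into $B$ disjoint batches, batch $i$ is replicated on $N_i$ of the $N$ workers (each worker hosts exactly one batch); worker service times are i.i.d. $\mathrm{Exp}(\lambda)$; batch $i$ is recovered when the fastest of its $N_i$ workers finishes, and the overall result is available when all batches are recovered, at time $T(\bar N)$. *)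

theory Defs
  imports "HOL-Probability.Probability"
begin

end

theory Submission
  imports Defs
begin

lemma convex_g: "convex_on {0<..} (\<lambda>y::real. - ln (1 - exp (- y)))"
proof (rule convex_on_realI[where f'="\<lambda>y. - (exp (-y) / (1 - exp (-y)))"])
  show "connected {0::real<..}" by simp
next
  fix x :: real assume "x \<in> {0<..}"
  then have x: "0 < x" by simp
  have "exp (-x) < 1" using x by simp
  then show "((\<lambda>y. - ln (1 - exp (- y))) has_real_derivative - (exp (-x) / (1 - exp (-x)))) (at x)"
    by (auto intro!: derivative_eq_intros)
next
  fix x y :: real assume "x \<in> {0<..}" "y \<in> {0<..}" "x \<le> y"
  have e: "exp (-z) / (1 - exp (-z)) = 1 / (exp z - 1)" if "0 < z" for z :: real
  proof -
    have "exp z * exp (-z) = 1" by (simp add: exp_minus)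
    moreover have "exp (-z) < 1" "1 < exp z" using that by auto
    ultimately show ?thesis by (simp add: field_simps)
  qed
  have "1 / (exp y - 1) \<le> 1 / (exp x - 1)"
    using \<open>x \<in> _\<close> \<open>x \<le> y\<close> by (intro divide_left_mono) auto
  then show "- (exp (-x) / (1 - exp (-x))) \<le> - (exp (-y) / (1 - exp (-y)))"
    using e \<open>x \<in> _\<close> \<open>y \<in> _\<close> by simp
qed

lemma jensen_prod:
  fixes x :: "nat \<Rightarrow> real" and B :: nat
  assumes "0 < B" "\<And>i. i < B \<Longrightarrow> 0 < x i"
  shows "(\<Prod>i<B. 1 - exp (- x i)) \<le> (1 - exp (- ((\<Sum>i<B. x i) / B))) ^ B"
proof -
  let ?g = "\<lambda>y::real. - ln (1 - exp (- y))"
  have c: "?g (\<Sum>i<B. (1 / real B) *\<^sub>R x i) \<le> (\<Sum>i<B. (1 / real B) * ?g (x i))"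
    by (rule convex_on_sum[OF _ _ convex_g]) (use assms in auto)
  have 1: "(\<Sum>i<B. ln (1 - exp (- x i))) \<le> B * ln (1 - exp (- ((\<Sum>i<B. x i) / B)))"
  proof -
    have a: "(\<Sum>i<B. ln (1 - exp (- x i)) / real B) \<le> ln (1 - exp (- ((\<Sum>i<B. x i) / B)))"
      using c by (simp add: sum_negf sum_divide_distrib)
    show ?thesis using a assms(1) by (simp add: sum_divide_distrib[symmetric] field_simps)
  qed
  have pos: "0 < 1 - exp (- x i)" if "i < B" for i using assms(2)[OF that] by simp
  have m: "0 < (\<Sum>i<B. x i) / B" using assms by (intro divide_pos_pos sum_pos) auto
  have "(\<Prod>i<B. 1 - exp (- x i)) = exp (\<Sum>i<B. ln (1 - exp (- x i)))"
    by (auto simp add: exp_sum intro!: prod.cong dest!: pos)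
  also have "\<dots> \<le> exp (B * ln (1 - exp (- ((\<Sum>i<B. x i) / B))))" using 1 by simp
  also have "\<dots> = (1 - exp (- ((\<Sum>i<B. x i) / B))) ^ B"
    using m by (simp add: exp_of_nat_mult)
  finally show ?thesis .
qed

lemma layer_cake:
  fixes f :: "'a \<Rightarrow> real"
  assumes sf: "sigma_finite_measure M" and f[measurable]: "f \<in> borel_measurable M"
  shows "(\<integral>\<^sup>+x. ennreal (f x) \<partial>M) =
    (\<integral>\<^sup>+t. emeasure M {x\<in>space M. t < f x} * indicator {0..} t \<partial>lborel)"
proof -
  interpret pair_sigma_finite M lborel
    unfolding pair_sigma_finite_def using sf lborel.sigma_finite_measure_axioms by simp
  have inner: "ennreal (f x) = (\<integral>\<^sup>+t. indicator {0..<f x} t \<partial>lborel)" for x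
  proof (cases "0 \<le> f x")
    case True then show ?thesis by simp
  next
    case False then show ?thesis by (simp add: ennreal_neg)
  qed
  have "(\<integral>\<^sup>+x. ennreal (f x) \<partial>M) = (\<integral>\<^sup>+x. (\<integral>\<^sup>+t. indicator {0..<f x} t \<partial>lborel) \<partial>M)"
    using inner by simp
  also have "\<dots> = (\<integral>\<^sup>+t. (\<integral>\<^sup>+x. indicator {0..<f x} t \<partial>M) \<partial>lborel)"
  proof (rule Fubini'[symmetric])
    have e1: "(\<lambda>(x, t). indicator {0..<f x} t :: ennreal) = (\<lambda>p. of_bool (0 \<le> snd p \<and> snd p < f (fst p)))"
      by (auto simp: fun_eq_iff split: split_indicator)
    have e2: "{p \<in> space (M \<Otimes>\<^sub>M lborel). 0 \<le> snd p \<and> snd p < f (fst p)} \<in> sets (M \<Otimes>\<^sub>M lborel)"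
      by measurable
    show "(\<lambda>(x, t). indicator {0..<f x} t :: ennreal) \<in> borel_measurable (M \<Otimes>\<^sub>M lborel)"
      unfolding e1 by measurable
  qed
  also have "\<dots> = (\<integral>\<^sup>+t. emeasure M {x\<in>space M. t < f x} * indicator {0..} t \<partial>lborel)"
  proof (rule nn_integral_cong)
    fix t :: real
    have ii: "(\<lambda>x. indicator {0..<f x} t :: ennreal) = (\<lambda>x. indicator {x. t < f x} x * indicator {0..} t)"
      by (auto simp: fun_eq_iff split: split_indicator)
    then show "(\<integral>\<^sup>+x. indicator {0..<f x} t \<partial>M) = emeasure M {x\<in>space M. t < f x} * indicator {0..} t"
    proof -
      have "(\<integral>\<^sup>+x. indicator {x. t < f x} x * indicator {0..} t \<partial>M) = (\<integral>\<^sup>+x. indicator {x. t < f x} x \<partial>M) * indicator {0..} t"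
        by (rule nn_integral_multc) measurable
      also have "(\<integral>\<^sup>+x. indicator {x. t < f x} x \<partial>M) = emeasure M ({x. t < f x} \<inter> space M)"
        by (rule nn_integral_indicator') measurable
      also have "{x. t < f x} \<inter> space M = {x\<in>space M. t < f x}" by auto
      finally show ?thesis using ii by simp
    qed
  qed
  finally show ?thesis .
qed


lemma (in prob_space) max_exp_cdf:
  fixes T :: "nat \<Rightarrow> 'a \<Rightarrow> real"
  assumes B: "0 < B" and ind: "indep_vars (\<lambda>_. borel) T {..<B}"
    and D: "\<forall>i<B. distributed M lborel (T i) (exponential_density (r i))"
    and r: "\<forall>i<B. 0 < r i" and t: "0 \<le> t"
  shows "prob {\<omega>\<in>space M. Max ((\<lambda>i. T i \<omega>) ` {..<B}) \<le> t} = (\<Prod>i<B. 1 - exp (- t * r i))"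
proof -
  have "{\<omega>\<in>space M. Max ((\<lambda>i. T i \<omega>) ` {..<B}) \<le> t} = (\<Inter>i\<in>{..<B}. T i -` {..t} \<inter> space M)"
    using B by auto
  then have "prob {\<omega>\<in>space M. Max ((\<lambda>i. T i \<omega>) ` {..<B}) \<le> t} = (\<Prod>i<B. prob (T i -` {..t} \<inter> space M))"
    using indep_varsD_finite[OF ind, of "\<lambda>_. {..t}"] B by (simp add: lessThan_empty_iff)
  also have "\<dots> = (\<Prod>i<B. 1 - exp (- t * r i))"
  proof (rule prod.cong)
    fix i assume "i \<in> {..<B}"
    then have "prob {x\<in>space M. T i x \<le> t} = 1 - exp (- t * r i)"
      using exponential_distributedD_le[of "T i" "r i" t] D r t by auto
    moreover have "T i -` {..t} \<inter> space M = {x\<in>space M. T i x \<le> t}" by auto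
    ultimately show "prob (T i -` {..t} \<inter> space M) = 1 - exp (- t * r i)" by simp
  qed simp
  finally show ?thesis .
qed


lemma (in prob_space) max_exp_expect:
  fixes T :: "nat \<Rightarrow> 'a \<Rightarrow> real"
  assumes B: "0 < B" and ind: "indep_vars (\<lambda>_. borel) T {..<B}"
    and D: "\<forall>i<B. distributed M lborel (T i) (exponential_density (r i))"
    and r: "\<forall>i<B. 0 < r i"
  defines "I \<equiv> (\<integral>\<^sup>+t. ennreal (1 - (\<Prod>i<B. 1 - exp (- t * r i))) * indicator {0..} t \<partial>lborel)"
  shows "expectation (\<lambda>\<omega>. Max ((\<lambda>i. T i \<omega>) ` {..<B})) = enn2real I" "I < \<infinity>"
proof -
  have Tm[measurable]: "T i \<in> borel_measurable M" if "i < B" for i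
    using D that distributed_measurable by fastforce
  let ?X = "\<lambda>\<omega>. Max ((\<lambda>i. T i \<omega>) ` {..<B})"
  have Xm[measurable]: "?X \<in> borel_measurable M"
    by (rule borel_measurable_Max) (auto intro: Tm)
  have D0: "distributed M lborel (T 0) (exponential_density (r 0))" using D B by auto
  have "AE \<omega> in M. 0 \<le> T 0 \<omega>"
    by (subst distributed_AE2[OF D0]) (auto simp: exponential_density_def)
  then have AE: "AE \<omega> in M. 0 \<le> ?X \<omega>"
    by eventually_elim (use B in \<open>auto intro: order.trans[OF _ Max_ge]\<close>)
  have eqI: "(\<integral>\<^sup>+\<omega>. ennreal (?X \<omega>) \<partial>M) = I"
    unfolding layer_cake[OF sigma_finite_measure_axioms Xm] I_def
  proof (rule nn_integral_cong)
    fix t :: real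
    show "emeasure M {x \<in> space M. t < ?X x} * indicator {0..} t =
          ennreal (1 - (\<Prod>i<B. 1 - exp (- t * r i))) * indicator {0..} t"
    proof (cases "0 \<le> t")
      case True
      have "{x \<in> space M. t < ?X x} = space M - {x \<in> space M. ?X x \<le> t}" by auto
      then have "prob {x \<in> space M. t < ?X x} = 1 - prob {x \<in> space M. ?X x \<le> t}"
        by (simp add: prob_compl)
      then show ?thesis using max_exp_cdf[OF B ind D r True]
        by (simp add: emeasure_eq_measure)
    qed simp
  qed
  have fin: "(\<integral>\<^sup>+\<omega>. ennreal (T i \<omega>) \<partial>M) < \<infinity>" if "i < B" for i
  proof -
    have "integrable M (\<lambda>x. T i x ^ 1)"
      using erlang_ith_moment_integrable[of "r i" "T i" 0 1] D r that by auto
    then show ?thesis using integrableD(2) by (auto simp: less_top)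
  qed
  have "(\<integral>\<^sup>+\<omega>. ennreal (?X \<omega>) \<partial>M) \<le> (\<integral>\<^sup>+\<omega>. (\<Sum>i<B. ennreal (T i \<omega>)) \<partial>M)"
  proof (rule nn_integral_mono)
    fix \<omega>
    have "?X \<omega> \<in> (\<lambda>i. T i \<omega>) ` {..<B}"
      using B by (intro Max_in) (auto simp: lessThan_empty_iff)
    then obtain j where j: "j < B" "?X \<omega> = T j \<omega>" by auto
    show "ennreal (?X \<omega>) \<le> (\<Sum>i<B. ennreal (T i \<omega>))"
      unfolding j(2) using j(1) by (intro member_le_sum) auto
  qed
  also have "\<dots> = (\<Sum>i<B. \<integral>\<^sup>+\<omega>. ennreal (T i \<omega>) \<partial>M)"
    by (rule nn_integral_sum) auto
  also have "\<dots> < \<infinity>" using fin by (simp add: ennreal_sum_less_top)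
  finally show "I < \<infinity>" using eqI by simp
  show "expectation ?X = enn2real I"
    using integral_eq_nn_integral[OF Xm AE] eqI by simp
qed


theorem theorem1:
  fixes N B :: nat and lam :: real and Nv :: "nat \<Rightarrow> nat"
    and M :: "'a measure" and T :: "nat \<Rightarrow> 'a \<Rightarrow> real"
    and M' :: "'b measure" and T' :: "nat \<Rightarrow> 'b \<Rightarrow> real"
  assumes "0 < N" and "0 < B" and "B dvd N" and "0 < lam"
    and "\<forall>i<B. 0 < Nv i" and "(\<Sum>i<B. Nv i) = N"
    and "prob_space M"
    and "prob_space.indep_vars M (\<lambda>_. borel) T {..<B}"
    and "\<forall>i<B. distributed M lborel (T i) (exponential_density (real (Nv i) * lam))"
    and "prob_space M'"
    and "prob_space.indep_vars M' (\<lambda>_. borel) T' {..<B}"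
    and "\<forall>i<B. distributed M' lborel (T' i) (exponential_density (real (N div B) * lam))"
  shows "prob_space.expectation M (\<lambda>\<omega>. Max ((\<lambda>i. T i \<omega>) ` {..<B}))
         \<ge> prob_space.expectation M' (\<lambda>\<omega>. Max ((\<lambda>i. T' i \<omega>) ` {..<B}))"
proof -
  have NB: "0 < N div B" using assms(1,2,3) by (auto elim!: dvdE)
  have rNB: "real (N div B) = real N / real B" using assms(3) by (simp add: real_of_nat_div)
  have r1: "\<forall>i<B. 0 < real (Nv i) * lam" using assms(4,5) by simp
  have r2: "\<forall>i<B. 0 < real (N div B) * lam" using assms(4) NB by simp
  note E1 = prob_space.max_exp_expect[OF assms(7) assms(2) assms(8) assms(9) r1]
  note E2 = prob_space.max_exp_expect[OF assms(10) assms(2) assms(11) assms(12) r2]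
  have le: "(\<integral>\<^sup>+t. ennreal (1 - (\<Prod>i<B. 1 - exp (- t * (real (N div B) * lam)))) * indicator {0..} t \<partial>lborel)
     \<le> (\<integral>\<^sup>+t. ennreal (1 - (\<Prod>i<B. 1 - exp (- t * (real (Nv i) * lam)))) * indicator {0..} t \<partial>lborel)"
  proof (rule nn_integral_mono)
    fix t :: real
    show "ennreal (1 - (\<Prod>i<B. 1 - exp (- t * (real (N div B) * lam)))) * indicator {0..} t
      \<le> ennreal (1 - (\<Prod>i<B. 1 - exp (- t * (real (Nv i) * lam)))) * indicator {0..} t"
    proof (cases "0 < t")
      case True
      have "(\<Prod>i<B. 1 - exp (- (t * (real (Nv i) * lam))))
          \<le> (1 - exp (- ((\<Sum>i<B. t * (real (Nv i) * lam)) / B))) ^ B"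
        using True assms(2,4,5) by (intro jensen_prod) auto
      also have "(\<Sum>i<B. t * (real (Nv i) * lam)) / B = t * (real (N div B) * lam)"
      proof -
        have "(\<Sum>i<B. t * (real (Nv i) * lam)) = t * lam * real (\<Sum>i<B. Nv i)"
          by (simp add: sum_distrib_left of_nat_sum algebra_simps)
        then show ?thesis using assms(2,6) rNB by simp
      qed
      finally have "(\<Prod>i<B. 1 - exp (- t * (real (Nv i) * lam)))
          \<le> (\<Prod>i<B. 1 - exp (- t * (real (N div B) * lam)))" by simp
      then show ?thesis by (intro mult_right_mono ennreal_leI) auto
    next
      case False
      show ?thesis
      proof (cases "t = 0")
        case True then show ?thesis using assms(2) by simp
      qed (use False in simp)
    qed
  qed
  show ?thesis
    unfolding E1(1) E2(1) by (rule enn2real_mono[OF le]) (use E1(2) in \<open>simp add: top_unique\<close>)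
qed

end
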